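(* Let $\omega\colon\mathbf Z_+\to(0,+\infty)$ be a positive weight, let $\mu\in\mathbf C\setminus\{0\}$ and let $f(z)=\sum_{k\ge3}c_kz^k\in\mathcal X_\omega$ be such that for every $m\ge1$ and every $n\ge0$, \[\frac{\mu^{-1}c_{(3m+2)2^n}}{\omega((3m+2)2^n)}=\frac{c_{(2m+1)2^n}}{\omega((2m+1)2^n)}\quad\text{and}\quad c_{2^{n+2}}=0.\] Then for every $k\ge3$ with $k\notin\{2^i;\ i\ge2\}$ there exist integer sequences $(m_n)_{n\ge1}$, $(p_n)_{n\ge1}$, $(j_n)_{n\ge1}$ such that: (i) $c_k=\big(\mu^{-n}\omega((2m_1+1)2^{p_1})/\omega((3m_n+2)2^{p_n})\big)\,c_{(3m_n+2)2^{p_n}}$ for every $n\ge1$; (ii) $m_n\ge1$ for every $n\ge1$; (iii) $3m_n+2=T^{j_n}(k)$ for every $n\ge1$; (iv) for every $n\ge1$, $j_{n+1}>j_n$ if and only if $3m_n+2\notin\{2^i;\ i\ge2\}$; (v) $(j_n)_{n\ge1}$ and $((3m_n+2)2^{p_n})_{n\ge1}$ are either both strictly increasing or both stationary.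
   Context: $T\colon\mathbf Z_+\to\mathbf Z_+$ is the modified Collatz map: $T(n)=n/2$ for $n$ even, $T(n)=(3n+1)/2$ for $n$ odd. $\mathcal X_\omega$ is the Hilbert space of holomorphic functions $f(z)=\sum_{n\ge3}c_nz^n$ on the unit disk with $\|f\|_\omega^2=\sum_{n\ge3}|c_n|^2/\omega(n)<\infty$. *)

theory Defs
  imports "HOL-Analysis.Analysis"
begin

definition collatzT :: "nat \<Rightarrow> nat" where
  "collatzT n = (if even n then n div 2 else (3 * n + 1) div 2)"

definition pow2_ge4 :: "nat set" where
  "pow2_ge4 = {2 ^ i | i. i \<ge> 2}"

definition X_omega :: "(nat \<Rightarrow> real) \<Rightarrow> (complex \<Rightarrow> complex) set" where
  "X_omega \<omega> = {f. \<exists>c :: nat \<Rightarrow> complex.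
      (\<forall>n<3. c n = 0) \<and>
      summable (\<lambda>n. (cmod (c (n + 3)))\<^sup>2 / \<omega> (n + 3)) \<and>
      (\<forall>z\<in>ball 0 1. (\<lambda>n. c n * z ^ n) sums f z)}"

definition stationary :: "(nat \<Rightarrow> nat) \<Rightarrow> bool" where
  "stationary s \<longleftrightarrow> (\<exists>N. \<forall>n\<ge>N. s n = s N)"

end

theory Submission
  imports Defs
begin

fun v2 :: "nat \<Rightarrow> nat" where
  "v2 n = (if n = 0 \<or> odd n then 0 else Suc (v2 (n div 2)))"

definition od :: "nat \<Rightarrow> nat" where "od n = n div 2 ^ v2 n"

declare v2.simps[simp del]

lemma v2_dec: "n > 0 \<Longrightarrow> odd (od n) \<and> od n * 2 ^ v2 n = n"
proof (induction n rule: v2.induct)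
  case (1 n)
  show ?case
  proof (cases "odd n")
    case True
    have "v2 n = 0" using True by (subst v2.simps) simp
    then show ?thesis using 1 True by (simp add: od_def)
  next
    case False
    then have v: "v2 n = Suc (v2 (n div 2))" using 1 by (subst v2.simps) simp
    have pos: "n div 2 > 0" using 1 False by auto
    have IH: "odd (od (n div 2)) \<and> od (n div 2) * 2 ^ v2 (n div 2) = n div 2"
      using 1 False pos by auto
    have e: "od n = od (n div 2)" unfolding od_def v
      by (simp add: div_mult2_eq)
    have "od n * 2 ^ v2 n = (od (n div 2) * 2 ^ v2 (n div 2)) * 2" unfolding e v by simp
    also have "\<dots> = n" using IH False by simp
    finally show ?thesis using IH e by simp
  qed
qed

lemma T_pow2: "(collatzT ^^ q) (x * 2 ^ q) = x"
proof (induction q)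
  case 0
  then show ?case by simp
next
  case (Suc q)
  have "collatzT (x * 2 ^ Suc q) = x * 2 ^ q" by (simp add: collatzT_def)
  then show ?case using Suc by (simp add: funpow_Suc_right del: funpow.simps)
qed

lemma dec:
  assumes "x \<ge> 3" "x \<notin> pow2_ge4"
  shows "(od x - 1) div 2 \<ge> 1 \<and> (2 * ((od x - 1) div 2) + 1) * 2 ^ v2 x = x
     \<and> (collatzT ^^ Suc (v2 x)) x = 3 * ((od x - 1) div 2) + 2"
proof -
  have d: "odd (od x)" "od x * 2 ^ v2 x = x" using v2_dec[of x] assms by auto
  have "od x \<noteq> 1"
  proof
    assume h: "od x = 1"
    then have x: "x = 2 ^ v2 x" using d by simp
    have "v2 x \<ge> 2"
    proof (rule ccontr)
      assume "\<not> v2 x \<ge> 2"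
      then have "v2 x = 0 \<or> v2 x = 1" by auto
      then show False using x assms by auto
    qed
    then show False using x assms(2) unfolding pow2_ge4_def by blast
  qed
  then have o3: "od x \<ge> 3" using d(1) by presburger
  define m where "m = (od x - 1) div 2"
  have om: "od x = 2 * m + 1" using d(1) o3 unfolding m_def by presburger
  have "(collatzT ^^ Suc (v2 x)) x = collatzT ((collatzT ^^ v2 x) (od x * 2 ^ v2 x))"
    using d by simp
  also have "\<dots> = collatzT (2 * m + 1)" by (simp only: T_pow2 om)
  also have "\<dots> = 3 * m + 2" by (simp add: collatzT_def)
  finally show ?thesis using om o3 d unfolding m_def[symmetric] by auto
qed

definition stp :: "nat \<times> nat \<times> nat \<Rightarrow> nat \<times> nat \<times> nat" where
  "stp s = (case s of (m, p, j) \<Rightarrow> if 3 * m + 2 \<in> pow2_ge4 then (m, p, j)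
     else ((od (3 * m + 2) - 1) div 2, p + v2 (3 * m + 2), Suc (v2 (3 * m + 2)) + j))"

theorem lemma2p8:
  fixes \<omega> :: "nat \<Rightarrow> real" and \<mu> :: complex
    and f :: "complex \<Rightarrow> complex" and c :: "nat \<Rightarrow> complex"
  assumes \<omega>_pos: "\<forall>n\<ge>1. \<omega> n > 0"
    and \<mu>_nz: "\<mu> \<noteq> 0"
    and fX: "f \<in> X_omega \<omega>"
    and c_low: "\<forall>n<3. c n = 0"
    and f_series: "\<forall>z\<in>ball 0 1. (\<lambda>n. c n * z ^ n) sums f z"
    and rel: "\<forall>m\<ge>1. \<forall>n::nat.
        inverse \<mu> * c ((3 * m + 2) * 2 ^ n) / complex_of_real (\<omega> ((3 * m + 2) * 2 ^ n))
        = c ((2 * m + 1) * 2 ^ n) / complex_of_real (\<omega> ((2 * m + 1) * 2 ^ n))"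
    and pow0: "\<forall>n::nat. c (2 ^ (n + 2)) = 0"
  shows "\<forall>k::nat. k \<ge> 3 \<and> k \<notin> pow2_ge4 \<longrightarrow>
    (\<exists>m p j :: nat \<Rightarrow> nat.
       (\<forall>n\<ge>1. c k = (inverse \<mu> ^ n * complex_of_real (\<omega> ((2 * m 1 + 1) * 2 ^ p 1))
                       / complex_of_real (\<omega> ((3 * m n + 2) * 2 ^ p n)))
                     * c ((3 * m n + 2) * 2 ^ p n)) \<and>
       (\<forall>n\<ge>1. m n \<ge> 1) \<and>
       (\<forall>n\<ge>1. 3 * m n + 2 = (collatzT ^^ j n) k) \<and>
       (\<forall>n\<ge>1. j (n + 1) > j n \<longleftrightarrow> 3 * m n + 2 \<notin> pow2_ge4) \<and>
       ((strict_mono_on {1..} j \<and> strict_mono_on {1..} (\<lambda>n. (3 * m n + 2) * 2 ^ p n)) \<or>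
        (stationary j \<and> stationary (\<lambda>n. (3 * m n + 2) * 2 ^ p n))))"
proof (intro allI impI)
  fix k :: nat assume k: "k \<ge> 3 \<and> k \<notin> pow2_ge4"
  define init where "init = ((od k - 1) div 2, v2 k, Suc (v2 k))"
  define S where "S n = (stp ^^ n) init" for n
  define A where "A s = (3 * fst s + 2) * 2 ^ fst (snd s)" for s :: "nat \<times> nat \<times> nat"
  have S0: "S 0 = init" by (simp add: S_def)
  have SS: "S (Suc n) = stp (S n)" for n by (simp add: S_def)
  have dk: "(od k - 1) div 2 \<ge> 1 \<and> (2 * ((od k - 1) div 2) + 1) * 2 ^ v2 k = k
     \<and> (collatzT ^^ Suc (v2 k)) k = 3 * ((od k - 1) div 2) + 2" using dec k by blast
  have "\<omega> k > 0" using \<omega>_pos k by simp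
  then have wk: "\<omega> k \<noteq> 0" by simp
  have inv: "fst (S n) \<ge> 1 \<and> 3 * fst (S n) + 2 = (collatzT ^^ snd (snd (S n))) k
     \<and> c k = inverse \<mu> ^ Suc n * of_real (\<omega> k) * (c (A (S n)) / of_real (\<omega> (A (S n))))" for n
  proof (induction n)
    case 0
    define m1 where "m1 = (od k - 1) div 2"
    have r: "inverse \<mu> * c (A init) / of_real (\<omega> (A init)) = c k / of_real (\<omega> k)"
      using rel[rule_format, of m1 "v2 k"] dk unfolding A_def init_def m1_def by auto
    have "c k = of_real (\<omega> k) * (c k / of_real (\<omega> k))" using wk by simp
    also have "\<dots> = inverse \<mu> * of_real (\<omega> k) * (c (A init) / of_real (\<omega> (A init)))"
      unfolding r[symmetric] by simp
    finally show ?case using dk unfolding S0 init_def by simp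
  next
    case (Suc n)
    obtain m p j where Sn: "S n = (m, p, j)" by (cases "S n")
    show ?case
    proof (cases "3 * m + 2 \<in> pow2_ge4")
      case True
      then obtain i where i: "3 * m + 2 = 2 ^ i" "i \<ge> 2" unfolding pow2_ge4_def by blast
      have ip: "i + p - 2 + 2 = i + p" using i by simp
      have "A (S n) = 2 ^ ((i + p - 2) + 2)" unfolding Sn A_def ip using i
        by (simp add: power_add)
      then have "c (A (S n)) = 0" using pow0 by simp
      then have ck: "c k = 0" using Suc by simp
      have "S (Suc n) = S n" unfolding SS using True Sn by (simp add: stp_def)
      then show ?thesis using Suc ck \<open>c (A (S n)) = 0\<close> by simp
    next
      case False
      have m1: "m \<ge> 1" using Suc Sn by simp
      define x where "x = 3 * m + 2"
      have dx: "(od x - 1) div 2 \<ge> 1 \<and> (2 * ((od x - 1) div 2) + 1) * 2 ^ v2 x = x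
         \<and> (collatzT ^^ Suc (v2 x)) x = 3 * ((od x - 1) div 2) + 2"
        using dec[of x] False m1 unfolding x_def by simp
      define m' where "m' = (od x - 1) div 2"
      define v where "v = v2 x"
      have S': "S (Suc n) = (m', p + v, Suc v + j)" unfolding SS Sn stp_def
        using False by (simp add: x_def m'_def v_def)
      have xj: "x = (collatzT ^^ j) k" using Suc Sn x_def by simp
      have "(collatzT ^^ (Suc v + j)) k = (collatzT ^^ Suc v) x"
        unfolding xj funpow_add by simp
      also have "\<dots> = 3 * m' + 2" using dx unfolding m'_def v_def by simp
      finally have T': "3 * m' + 2 = (collatzT ^^ (Suc v + j)) k" by simp
      have eA: "(2 * m' + 1) * 2 ^ (p + v) = A (S n)"
        proof -
        have e1: "(2 * m' + 1) * 2 ^ v = x" using dx m'_def v_def by simp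
        have "(2 * m' + 1) * 2 ^ (p + v) = ((2 * m' + 1) * 2 ^ v) * 2 ^ p"
          by (simp add: power_add ac_simps)
        also have "\<dots> = x * 2 ^ p" using e1 by simp
        also have "\<dots> = A (S n)" by (simp add: A_def Sn x_def)
        finally show ?thesis .
      qed
      have r: "inverse \<mu> * c (A (S (Suc n))) / of_real (\<omega> (A (S (Suc n))))
          = c (A (S n)) / of_real (\<omega> (A (S n)))"
        using rel[rule_format, of m' "p + v"] dx eA unfolding S' A_def m'_def by auto
      have "c k = inverse \<mu> ^ Suc n * of_real (\<omega> k) * (c (A (S n)) / of_real (\<omega> (A (S n))))"
        using Suc by simp
      also have "\<dots> = inverse \<mu> ^ Suc (Suc n) * of_real (\<omega> k) *
          (c (A (S (Suc n))) / of_real (\<omega> (A (S (Suc n)))))"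
        unfolding r[symmetric] by simp
      finally show ?thesis using S' T' dx m'_def by simp
    qed
  qed
  have jstep: "snd (snd (S (Suc n))) > snd (snd (S n)) \<longleftrightarrow> 3 * fst (S n) + 2 \<notin> pow2_ge4" for n
    unfolding SS by (cases "S n") (auto simp: stp_def)
  have astep: "A (S (Suc n)) > A (S n)" if h: "3 * fst (S n) + 2 \<notin> pow2_ge4" for n
  proof -
    obtain m p j where Sn: "S n = (m, p, j)" by (cases "S n")
    define x where "x = 3 * m + 2"
    have m1: "m \<ge> 1" using inv[of n] Sn by simp
    have dx: "(od x - 1) div 2 \<ge> 1 \<and> (2 * ((od x - 1) div 2) + 1) * 2 ^ v2 x = x"
      using dec[of x] h Sn m1 unfolding x_def by simp
    define m' where "m' = (od x - 1) div 2"
    define v where "v = v2 x"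
    have S': "S (Suc n) = (m', p + v, Suc v + j)" unfolding SS Sn stp_def
      using h Sn by (simp add: x_def m'_def v_def)
    have eA: "(2 * m' + 1) * 2 ^ (p + v) = A (S n)"
      proof -
        have e1: "(2 * m' + 1) * 2 ^ v = x" using dx m'_def v_def by simp
        have "(2 * m' + 1) * 2 ^ (p + v) = ((2 * m' + 1) * 2 ^ v) * 2 ^ p"
          by (simp add: power_add ac_simps)
        also have "\<dots> = x * 2 ^ p" using e1 by simp
        also have "\<dots> = A (S n)" by (simp add: A_def Sn x_def)
        finally show ?thesis .
      qed
    have "(2 * m' + 1) * 2 ^ (p + v) < (3 * m' + 2) * 2 ^ (p + v)" by simp
    then have lt: "(2 * m' + 1) * 2 ^ (p + v) < (3 * m' + 2) * 2 ^ (p + v)" .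
    have a1: "A (S (Suc n)) = (3 * m' + 2) * 2 ^ (p + v)" using S' by (simp add: A_def)
    show ?thesis unfolding a1 eA[symmetric] by (rule lt)
  qed
  have fixS: "S (Suc n) = S n" if "3 * fst (S n) + 2 \<in> pow2_ge4" for n
    using that unfolding SS by (cases "S n") (auto simp: stp_def)
  define m where "m n = fst (S (n - 1))" for n
  define p where "p n = fst (snd (S (n - 1)))" for n
  define j where "j n = snd (snd (S (n - 1)))" for n
  have Am: "(3 * m n + 2) * 2 ^ p n = A (S (n - 1))" for n unfolding A_def m_def p_def by simp
  have k1: "(2 * m 1 + 1) * 2 ^ p 1 = k" using dk by (simp add: m_def p_def S0 init_def)
  show "\<exists>m p j :: nat \<Rightarrow> nat.
       (\<forall>n\<ge>1. c k = (inverse \<mu> ^ n * complex_of_real (\<omega> ((2 * m 1 + 1) * 2 ^ p 1))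
                       / complex_of_real (\<omega> ((3 * m n + 2) * 2 ^ p n)))
                     * c ((3 * m n + 2) * 2 ^ p n)) \<and>
       (\<forall>n\<ge>1. m n \<ge> 1) \<and>
       (\<forall>n\<ge>1. 3 * m n + 2 = (collatzT ^^ j n) k) \<and>
       (\<forall>n\<ge>1. j (n + 1) > j n \<longleftrightarrow> 3 * m n + 2 \<notin> pow2_ge4) \<and>
       ((strict_mono_on {1..} j \<and> strict_mono_on {1..} (\<lambda>n. (3 * m n + 2) * 2 ^ p n)) \<or>
        (stationary j \<and> stationary (\<lambda>n. (3 * m n + 2) * 2 ^ p n)))"
  proof (intro exI conjI allI impI)
    fix n :: nat assume n: "n \<ge> 1"
    then have ns: "Suc (n - 1) = n" by simp
    have "c k = inverse \<mu> ^ n * of_real (\<omega> k) * (c (A (S (n - 1))) / of_real (\<omega> (A (S (n - 1)))))"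
      using inv[of "n - 1"] ns by simp
    then show "c k = (inverse \<mu> ^ n * complex_of_real (\<omega> ((2 * m 1 + 1) * 2 ^ p 1))
                       / complex_of_real (\<omega> ((3 * m n + 2) * 2 ^ p n)))
                     * c ((3 * m n + 2) * 2 ^ p n)"
      unfolding k1 Am by simp
  next
    fix n :: nat assume n: "n \<ge> 1"
    show "m n \<ge> 1" using inv[of "n - 1"] unfolding m_def by simp
  next
    fix n :: nat assume n: "n \<ge> 1"
    show "3 * m n + 2 = (collatzT ^^ j n) k" using inv[of "n - 1"] unfolding m_def j_def by simp
  next
    fix n :: nat assume n: "n \<ge> 1"
    then have ns: "Suc (n - 1) = n" by simp
    show "j (n + 1) > j n \<longleftrightarrow> 3 * m n + 2 \<notin> pow2_ge4"
      using jstep[of "n - 1"] ns unfolding j_def m_def by simp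
  next
    show "(strict_mono_on {1..} j \<and> strict_mono_on {1..} (\<lambda>n. (3 * m n + 2) * 2 ^ p n)) \<or>
        (stationary j \<and> stationary (\<lambda>n. (3 * m n + 2) * 2 ^ p n))"
    proof (cases "\<forall>n. 3 * fst (S n) + 2 \<notin> pow2_ge4")
      case True
      have gj: "snd (snd (S a)) < snd (snd (S b))" if "a < b" for a b
        using lift_Suc_mono_less[of "\<lambda>n. snd (snd (S n))", OF _ that] jstep True by blast
      have gA: "A (S a) < A (S b)" if "a < b" for a b
        using lift_Suc_mono_less[of "\<lambda>n. A (S n)", OF _ that] astep True by blast
      have "strict_mono_on {1..} j"
        by (rule strict_mono_onI) (auto simp: j_def intro!: gj)
      moreover have "strict_mono_on {1..} (\<lambda>n. (3 * m n + 2) * 2 ^ p n)"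
        unfolding Am by (rule strict_mono_onI) (auto intro!: gA)
      ultimately show ?thesis by blast
    next
      case False
      then obtain N where N: "3 * fst (S N) + 2 \<in> pow2_ge4" by blast
      have st: "S (N + d) = S N" for d
      proof (induction d)
        case 0 then show ?case by simp
      next
        case (Suc d)
        have "S (N + Suc d) = S (Suc (N + d))" by simp
        also have "\<dots> = S (N + d)" using fixS Suc N by simp
        finally show ?case using Suc by simp
      qed
      have st': "S (n - 1) = S N" if "n \<ge> N + 1" for n
        using st[of "n - 1 - N"] that by simp
      have "stationary j" unfolding stationary_def j_def
      proof (intro exI[of _ "N + 1"] allI impI)
        fix n :: nat assume "n \<ge> N + 1"
        then show "snd (snd (S (n - 1))) = snd (snd (S (N + 1 - 1)))" using st'[of n] by simp
      qed
      moreover have "stationary (\<lambda>n. (3 * m n + 2) * 2 ^ p n)" unfolding stationary_def Am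
      proof (intro exI[of _ "N + 1"] allI impI)
        fix n :: nat assume "n \<ge> N + 1"
        then show "A (S (n - 1)) = A (S (N + 1 - 1))" using st'[of n] by simp
      qed
      ultimately show ?thesis by blast
    qed
  qed
qed

end
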